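(* Let $\{G_i\}_{i\in I}$ be a family of profinite-$C$ groups. Then the cartesian product $\mathrm{Cr}_{i\in I}\,G_i$ (with the product topology) is a profinite-$C$ group. As a consequence, the inverse limit of any inverse system of profinite-$C$ groups (with continuous homomorphisms) is a profinite-$C$ group.
   Context: A permutable complement of a subgroup $H$ of a group $G$ is a subgroup $K$ with $G=HK$ and $H\cap K=1$. A profinite group $G$ is a profinite-$C$ group if every closed subgroup of $G$ has a closed permutable complement in $G$. $\mathrm{Cr}_{i\in I}\,G_i$ denotes the full cartesian product. *)

theory Defs
  imports "HOL-Analysis.Analysis" "HOL-Algebra.Algebra"
begin

definition totally_disconnected_space :: "'a topology \<Rightarrow> bool" where
  "totally_disconnected_space Y \<longleftrightarrow>
     (\<forall>S. connectedin Y S \<longrightarrow> (\<exists>z. S \<subseteq> {z}))"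

definition topological_group :: "('a, 'b) monoid_scheme \<Rightarrow> 'a topology \<Rightarrow> bool" where
  "topological_group G T \<longleftrightarrow>
     group G \<and> topspace T = carrier G \<and>
     continuous_map (prod_topology T T) T (\<lambda>(x, y). x \<otimes>\<^bsub>G\<^esub> y) \<and>
     continuous_map T T (\<lambda>x. inv\<^bsub>G\<^esub> x)"

definition profinite_group :: "('a, 'b) monoid_scheme \<Rightarrow> 'a topology \<Rightarrow> bool" where
  "profinite_group G T \<longleftrightarrow>
     topological_group G T \<and> compact_space T \<and> Hausdorff_space T \<and>
     totally_disconnected_space T"

definition permutable_complement :: "('a, 'b) monoid_scheme \<Rightarrow> 'a set \<Rightarrow> 'a set \<Rightarrow> bool" where
  "permutable_complement G H K \<longleftrightarrow>
     subgroup K G \<and> H <#>\<^bsub>G\<^esub> K = carrier G \<and> H \<inter> K = {\<one>\<^bsub>G\<^esub>}"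

definition profinite_C_group :: "('a, 'b) monoid_scheme \<Rightarrow> 'a topology \<Rightarrow> bool" where
  "profinite_C_group G T \<longleftrightarrow>
     profinite_group G T \<and>
     (\<forall>H. subgroup H G \<and> closedin T H \<longrightarrow>
        (\<exists>K. closedin T K \<and> permutable_complement G H K))"

definition inverse_system ::
  "'i set \<Rightarrow> ('i \<Rightarrow> 'i \<Rightarrow> bool) \<Rightarrow> ('i \<Rightarrow> ('a, 'b) monoid_scheme) \<Rightarrow> ('i \<Rightarrow> 'a topology)
     \<Rightarrow> ('i \<Rightarrow> 'i \<Rightarrow> 'a \<Rightarrow> 'a) \<Rightarrow> bool" where
  "inverse_system I leq G T f \<longleftrightarrow>
     (\<forall>i\<in>I. leq i i) \<and>
     (\<forall>i\<in>I. \<forall>j\<in>I. \<forall>k\<in>I. leq i j \<and> leq j k \<longrightarrow> leq i k) \<and>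
     (\<forall>i\<in>I. \<forall>j\<in>I. \<exists>k\<in>I. leq i k \<and> leq j k) \<and>
     (\<forall>i\<in>I. topological_group (G i) (T i)) \<and>
     (\<forall>i\<in>I. \<forall>j\<in>I. leq j i \<longrightarrow>
        f i j \<in> hom (G i) (G j) \<and> continuous_map (T i) (T j) (f i j)) \<and>
     (\<forall>i\<in>I. \<forall>x\<in>carrier (G i). f i i x = x) \<and>
     (\<forall>i\<in>I. \<forall>j\<in>I. \<forall>k\<in>I. leq k j \<and> leq j i \<longrightarrow>
        (\<forall>x\<in>carrier (G i). f j k (f i j x) = f i k x))"

definition inv_limit_carrier ::
  "'i set \<Rightarrow> ('i \<Rightarrow> 'i \<Rightarrow> bool) \<Rightarrow> ('i \<Rightarrow> ('a, 'b) monoid_scheme) \<Rightarrow> ('i \<Rightarrow> 'i \<Rightarrow> 'a \<Rightarrow> 'a)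
     \<Rightarrow> ('i \<Rightarrow> 'a) set" where
  "inv_limit_carrier I leq G f =
     {x \<in> (\<Pi>\<^sub>E i\<in>I. carrier (G i)). \<forall>i\<in>I. \<forall>j\<in>I. leq j i \<longrightarrow> f i j (x i) = x j}"

definition inv_limit_group ::
  "'i set \<Rightarrow> ('i \<Rightarrow> 'i \<Rightarrow> bool) \<Rightarrow> ('i \<Rightarrow> ('a, 'b) monoid_scheme) \<Rightarrow> ('i \<Rightarrow> 'i \<Rightarrow> 'a \<Rightarrow> 'a)
     \<Rightarrow> ('i \<Rightarrow> 'a) monoid" where
  "inv_limit_group I leq G f =
     (product_group I G)\<lparr>carrier := inv_limit_carrier I leq G f\<rparr>"

definition inv_limit_topology ::
  "'i set \<Rightarrow> ('i \<Rightarrow> 'i \<Rightarrow> bool) \<Rightarrow> ('i \<Rightarrow> ('a, 'b) monoid_scheme) \<Rightarrow> ('i \<Rightarrow> 'a topology)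
     \<Rightarrow> ('i \<Rightarrow> 'i \<Rightarrow> 'a \<Rightarrow> 'a) \<Rightarrow> ('i \<Rightarrow> 'a) topology" where
  "inv_limit_topology I leq G T f =
     subtopology (product_topology T I) (inv_limit_carrier I leq G f)"

end

theory Submission
  imports Defs
begin


lemma wo_facts:
  obtains r :: "'a rel" where "\<And>i. (i,i) \<in> r"
    "\<And>i j k. (i,j) \<in> r \<Longrightarrow> (j,k) \<in> r \<Longrightarrow> (i,k) \<in> r"
    "\<And>i j. (i,j) \<in> r \<or> (j,i) \<in> r"
    "\<And>i j. (i,j) \<in> r \<Longrightarrow> (j,i) \<in> r \<Longrightarrow> i = j"
    "wf (r - Id)"
proof -
  from well_ordering obtain r :: "'a rel" where r: "Well_order r" "Field r = UNIV" by (elim exE conjE)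
  then have wo: "well_order_on UNIV r" by simp
  then have lo: "linear_order_on UNIV r" and w: "wf (r - Id)"
    unfolding well_order_on_def by blast+
  then have po: "partial_order_on UNIV r" and tot: "total_on UNIV r"
    unfolding linear_order_on_def by blast+
  have rf: "refl_on UNIV r" and tr: "trans r" and an: "antisym r"
    using partial_order_onD[OF po] by blast+
  show ?thesis
  proof (rule that)
    show "(i,i) \<in> r" for i using rf by (simp add: refl_on_def)
    show "(i,j) \<in> r \<Longrightarrow> (j,k) \<in> r \<Longrightarrow> (i,k) \<in> r" for i j k using tr
      by (rule transD)
    show "(i,j) \<in> r \<or> (j,i) \<in> r" for i j
    proof (cases "i = j")
      case True then show ?thesis using rf by (simp add: refl_on_def)
    next
      case False then show ?thesis using tot by (simp add: total_on_def)
    qed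
    show "(i,j) \<in> r \<Longrightarrow> (j,i) \<in> r \<Longrightarrow> i = j" for i j using an
      by (rule antisymD)
  qed (rule w)
qed

lemma finite_chain_Inter_mem:
  assumes "finite F" "F \<noteq> {}" "\<forall>U\<in>F. \<forall>V\<in>F. U \<subseteq> V \<or> V \<subseteq> U"
  shows "\<Inter>F \<in> F"
  using assms
proof (induction F rule: finite_ne_induct)
  case (singleton x) then show ?case by simp
next
  case (insert x F)
  then have "\<Inter>F \<in> F" by blast
  with insert.prems have "x \<subseteq> \<Inter>F \<or> \<Inter>F \<subseteq> x" by blast
  then show ?case using \<open>\<Inter>F \<in> F\<close> by (auto simp: Int_absorb1 Int_absorb2)
qed

lemma chain_closed_Inter_nonempty:
  assumes XX: "compact_space XX" and H: "closedin XX H" "H \<noteq> {}"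
    and U: "\<forall>U\<in>UU. closedin XX U \<and> U \<subseteq> H \<and> U \<noteq> {}"
    and ch: "\<forall>U\<in>UU. \<forall>V\<in>UU. U \<subseteq> V \<or> V \<subseteq> U"
  shows "H \<inter> \<Inter>UU \<noteq> {}"
proof -
  have c1: "\<forall>C\<in>insert H UU. closedin XX C" using H U by auto
  have c2: "\<forall>FF. finite FF \<and> FF \<subseteq> insert H UU \<longrightarrow> \<Inter>FF \<noteq> {}"
  proof (intro allI impI)
    fix FF assume F: "finite FF \<and> FF \<subseteq> insert H UU"
    show "\<Inter>FF \<noteq> {}"
    proof (cases "FF = {}")
      case False
      have "\<forall>U\<in>FF. \<forall>V\<in>FF. U \<subseteq> V \<or> V \<subseteq> U"
      proof (intro ballI)
        fix U V assume "U \<in> FF" "V \<in> FF"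
        then have "U \<in> insert H UU" "V \<in> insert H UU" using F by auto
        then show "U \<subseteq> V \<or> V \<subseteq> U"
        proof (elim insertE)
          assume "U = H" "V = H" then show ?thesis by simp
        next
          assume "U = H" "V \<in> UU" then show ?thesis using U by simp
        next
          assume "U \<in> UU" "V = H" then show ?thesis using U by simp
        next
          assume "U \<in> UU" "V \<in> UU" then show ?thesis using ch by simp
        qed
      qed
      then have "\<Inter>FF \<in> FF" by (intro finite_chain_Inter_mem) (use F False in auto)
      then have "\<Inter>FF \<in> insert H UU" using F by auto
      then show ?thesis using U H by auto
    qed simp
  qed
  have "\<Inter>(insert H UU) \<noteq> {}"
    using assms(1)[unfolded compact_space_fip, rule_format, of "insert H UU"] c1 c2 by blast
  then show ?thesis by simp
qed



lemma tg_mult_cont: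
  assumes "topological_group G T" "continuous_map Z T f" "continuous_map Z T g"
  shows "continuous_map Z T (\<lambda>z. f z \<otimes>\<^bsub>G\<^esub> g z)"
proof -
  have m: "continuous_map (prod_topology T T) T (\<lambda>(x, y). x \<otimes>\<^bsub>G\<^esub> y)"
    using assms(1) by (simp add: topological_group_def)
  have "continuous_map Z T ((\<lambda>(x, y). x \<otimes>\<^bsub>G\<^esub> y) \<circ> (\<lambda>z. (f z, g z)))"
    by (rule continuous_map_compose[OF continuous_map_pairedI[OF assms(2,3)] m])
  then show ?thesis by (simp add: o_def)
qed

lemma tg_inv_cont:
  assumes "topological_group G T" "continuous_map Z T f"
  shows "continuous_map Z T (\<lambda>z. inv\<^bsub>G\<^esub> f z)"
proof -
  have m: "continuous_map T T (\<lambda>x. inv\<^bsub>G\<^esub> x)"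
    using assms(1) by (simp add: topological_group_def)
  have "continuous_map Z T ((\<lambda>x. inv\<^bsub>G\<^esub> x) \<circ> f)"
    by (rule continuous_map_compose[OF assms(2) m])
  then show ?thesis by (simp add: o_def)
qed

lemma product_topological_group:
  assumes "\<forall>i\<in>I. topological_group (G i) (T i)"
  shows "topological_group (product_group I G) (product_topology T I)"
proof -
  let ?X = "product_topology T I"
  have gi: "group (G i)" if "i \<in> I" for i using assms that by (simp add: topological_group_def)
  have ti: "topspace (T i) = carrier (G i)" if "i \<in> I" for i using assms that by (simp add: topological_group_def)
  have top: "topspace ?X = carrier (product_group I G)"
    using ti by (simp add: topspace_product_topology cong: PiE_cong)
  have mult: "continuous_map (prod_topology ?X ?X) ?X (\<lambda>(x, y). x \<otimes>\<^bsub>product_group I G\<^esub> y)"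
    unfolding continuous_map_componentwise
  proof (intro conjI ballI)
    show "(\<lambda>(x, y). x \<otimes>\<^bsub>product_group I G\<^esub> y) ` topspace (prod_topology ?X ?X) \<subseteq> extensional I"
      by auto
    fix k assume k: "k \<in> I"
    have pk: "continuous_map ?X (T k) (\<lambda>x. x k)" using k by (rule continuous_map_product_projection)
    have f1: "continuous_map (prod_topology ?X ?X) (T k) (\<lambda>z. fst z k)"
      using continuous_map_compose[OF continuous_map_fst pk] by (simp add: o_def)
    have f2: "continuous_map (prod_topology ?X ?X) (T k) (\<lambda>z. snd z k)"
      using continuous_map_compose[OF continuous_map_snd pk] by (simp add: o_def)
    have "continuous_map (prod_topology ?X ?X) (T k) (\<lambda>z. fst z k \<otimes>\<^bsub>G k\<^esub> snd z k)"
      by (rule tg_mult_cont[OF _ f1 f2]) (use assms k in auto)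
    then show "continuous_map (prod_topology ?X ?X) (T k) (\<lambda>x. ((\<lambda>(x, y). x \<otimes>\<^bsub>product_group I G\<^esub> y) x) k)"
      using k by (simp add: case_prod_beta)
  qed
  have inv: "continuous_map ?X ?X (\<lambda>x. inv\<^bsub>product_group I G\<^esub> x)"
  proof (rule continuous_map_eq)
    show "continuous_map ?X ?X (\<lambda>x. \<lambda>i\<in>I. inv\<^bsub>G i\<^esub> x i)"
      unfolding continuous_map_componentwise
    proof (intro conjI ballI)
      show "(\<lambda>x. \<lambda>i\<in>I. inv\<^bsub>G i\<^esub> x i) ` topspace ?X \<subseteq> extensional I" by auto
      fix k assume k: "k \<in> I"
      have "continuous_map ?X (T k) (\<lambda>x. inv\<^bsub>G k\<^esub> x k)"
        by (rule tg_inv_cont[of "G k"]) (use assms k in \<open>auto intro: continuous_map_product_projection\<close>)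
      then show "continuous_map ?X (T k) (\<lambda>x. (\<lambda>i\<in>I. inv\<^bsub>G i\<^esub> x i) k)"
        using k by simp
    qed
    fix x assume "x \<in> topspace ?X"
    then have "x \<in> (\<Pi>\<^sub>E i\<in>I. carrier (G i))" using top by simp
    then show "(\<lambda>i\<in>I. inv\<^bsub>G i\<^esub> x i) = inv\<^bsub>product_group I G\<^esub> x"
      using gi by simp
  qed
  show ?thesis unfolding topological_group_def
    using gi top mult inv by simp
qed

lemma product_totally_disconnected:
  assumes "\<forall>i\<in>I. totally_disconnected_space (T i)"
  shows "totally_disconnected_space (product_topology T I)"
  unfolding totally_disconnected_space_def
proof (intro allI impI)
  fix S assume S: "connectedin (product_topology T I) S"
  show "\<exists>z. S \<subseteq> {z}"
  proof (cases "S = {}")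
    case False
    then obtain s where s: "s \<in> S" by blast
    have sub: "S \<subseteq> (\<Pi>\<^sub>E i\<in>I. topspace (T i))"
      using connectedin_subset_topspace[OF S] by simp
    have "x = s" if x: "x \<in> S" for x
    proof (rule PiE_ext)
      show "x \<in> (\<Pi>\<^sub>E i\<in>I. topspace (T i))" "s \<in> (\<Pi>\<^sub>E i\<in>I. topspace (T i))" using sub x s by auto
      fix k assume k: "k \<in> I"
      have "connectedin (T k) ((\<lambda>x. x k) ` S)"
        by (rule connectedin_continuous_map_image[OF continuous_map_product_projection[OF k] S])
      then obtain z where "(\<lambda>x. x k) ` S \<subseteq> {z}"
        using assms k unfolding totally_disconnected_space_def by blast
      then show "x k = s k" using x s by blast
    qed
    then show ?thesis by blast
  qed simp
qed

lemma product_profinite: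
  assumes "\<forall>i\<in>I. profinite_group (G i) (T i)"
  shows "profinite_group (product_group I G) (product_topology T I)"
  unfolding profinite_group_def
proof (intro conjI)
  show "topological_group (product_group I G) (product_topology T I)"
    using assms by (intro product_topological_group) (simp add: profinite_group_def)
  show "compact_space (product_topology T I)"
    using assms by (simp add: compact_space_product_topology profinite_group_def)
  show "Hausdorff_space (product_topology T I)"
    using assms by (simp add: Hausdorff_space_product_topology profinite_group_def)
  show "totally_disconnected_space (product_topology T I)"
    using assms by (intro product_totally_disconnected) (simp add: profinite_group_def)
qed



lemma (in group) inv_prod_aux:
  assumes "x \<in> carrier G" "d \<in> carrier G" "g \<in> carrier G" "c \<in> carrier G"
    and "inv x \<otimes> g = d \<otimes> c"
  shows "inv (x \<otimes> d) \<otimes> g = c"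
proof -
  have "inv (x \<otimes> d) \<otimes> g = (inv d \<otimes> inv x) \<otimes> g" using assms by (simp add: inv_mult_group)
  also have "\<dots> = inv d \<otimes> (inv x \<otimes> g)" using assms by (simp add: m_assoc)
  also have "\<dots> = inv d \<otimes> (d \<otimes> c)" by (simp only: assms(5))
  also have "\<dots> = c" using assms by (simp add: m_assoc[symmetric])
  finally show ?thesis .
qed

lemma product_complement:
  fixes G :: "'i \<Rightarrow> ('a, 'b) monoid_scheme" and T :: "'i \<Rightarrow> 'a topology"
  assumes Cg: "\<forall>i\<in>I. profinite_C_group (G i) (T i)"
    and Hs: "subgroup H (product_group I G)" and Hc: "closedin (product_topology T I) H"
  shows "\<exists>K. closedin (product_topology T I) K \<and> permutable_complement (product_group I G) H K"
proof -
  obtain r :: "'i rel" where rrefl: "\<And>i. (i,i) \<in> r"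
    and rtrans: "\<And>i j k. (i,j) \<in> r \<Longrightarrow> (j,k) \<in> r \<Longrightarrow> (i,k) \<in> r"
    and rtot: "\<And>i j. (i,j) \<in> r \<or> (j,i) \<in> r"
    and rantisym: "\<And>i j. (i,j) \<in> r \<Longrightarrow> (j,i) \<in> r \<Longrightarrow> i = j"
    and rwf: "wf (r - Id)"
    using wo_facts by blast
  let ?P = "product_group I G" and ?X = "product_topology T I"
  have pf: "\<forall>i\<in>I. profinite_group (G i) (T i)" using Cg by (simp add: profinite_C_group_def)
  have tgi: "topological_group (G i) (T i)" if "i \<in> I" for i using pf that by (simp add: profinite_group_def)
  have gi: "group (G i)" if "i \<in> I" for i using tgi[OF that] by (simp add: topological_group_def)
  have ti: "topspace (T i) = carrier (G i)" if "i \<in> I" for i using tgi[OF that] by (simp add: topological_group_def)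
  have hi: "Hausdorff_space (T i)" if "i \<in> I" for i using pf that by (simp add: profinite_group_def)
  have PX: "profinite_group ?P ?X" by (rule product_profinite[OF pf])
  have gP: "group ?P" using gi by simp
  have cX: "compact_space ?X" using PX by (simp add: profinite_group_def)
  have topX: "topspace ?X = carrier ?P"
    using ti by (simp add: topspace_product_topology cong: PiE_cong)
  have Hsub: "H \<subseteq> carrier ?P" using Hs by (rule subgroup.subset)
  have one_H: "\<one>\<^bsub>?P\<^esub> \<in> H" using Hs by (rule subgroup.one_closed)
  have invP: "inv\<^bsub>?P\<^esub> h = (\<lambda>i\<in>I. inv\<^bsub>G i\<^esub> h i)" if "h \<in> carrier ?P" for h
    using that gi by simp

  define lt where "lt i = {j \<in> I. (j,i) \<in> r \<and> j \<noteq> i}" for i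
  define le where "le i = {j \<in> I. (j,i) \<in> r}" for i
  define Hi where "Hi i = {h \<in> H. \<forall>j\<in>lt i. h j = \<one>\<^bsub>G j\<^esub>}" for i
  define D where "D i = (\<lambda>h. h i) ` Hi i" for i

  have Dsub: "subgroup (D i) (G i)" if i: "i \<in> I" for i
  proof (rule group.subgroupI[OF gi[OF i]])
    show "D i \<subseteq> carrier (G i)"
      using Hsub i by (auto simp: D_def Hi_def PiE_iff)
    have "\<one>\<^bsub>?P\<^esub> \<in> Hi i" using one_H by (auto simp: Hi_def lt_def)
    then show "D i \<noteq> {}" by (auto simp: D_def)
  next
    fix a assume "a \<in> D i"
    then obtain h where h: "h \<in> Hi i" "a = h i" by (auto simp: D_def)
    then have hH: "h \<in> H" and hc: "h \<in> carrier ?P" using Hsub by (auto simp: Hi_def)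
    have "inv\<^bsub>?P\<^esub> h \<in> H" using Hs hH by (rule subgroup.m_inv_closed)
    moreover have "\<forall>j\<in>lt i. (inv\<^bsub>?P\<^esub> h) j = \<one>\<^bsub>G j\<^esub>"
      using h invP[OF hc] gi by (auto simp: Hi_def lt_def group.is_monoid monoid.inv_one)
    ultimately have "inv\<^bsub>?P\<^esub> h \<in> Hi i" by (simp add: Hi_def)
    moreover have "(inv\<^bsub>?P\<^esub> h) i = inv\<^bsub>G i\<^esub> a" using invP[OF hc] h i by simp
    ultimately show "inv\<^bsub>G i\<^esub> a \<in> D i" unfolding D_def by (metis (no_types, lifting) image_eqI)
  next
    fix a b assume "a \<in> D i" "b \<in> D i"
    then obtain h h' where h: "h \<in> Hi i" "a = h i" and h': "h' \<in> Hi i" "b = h' i" by (auto simp: D_def)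
    have "h \<in> H" "h' \<in> H" using h(1) h'(1) by (auto simp: Hi_def)
    then have "h \<otimes>\<^bsub>?P\<^esub> h' \<in> H" by (rule subgroup.m_closed[OF Hs])
    moreover have "\<forall>j\<in>lt i. (h \<otimes>\<^bsub>?P\<^esub> h') j = \<one>\<^bsub>G j\<^esub>"
      using h h' gi by (auto simp: Hi_def lt_def group.is_monoid monoid.l_one)
    ultimately have "h \<otimes>\<^bsub>?P\<^esub> h' \<in> Hi i" by (simp add: Hi_def)
    moreover have "(h \<otimes>\<^bsub>?P\<^esub> h') i = a \<otimes>\<^bsub>G i\<^esub> b" using h h' i by simp
    ultimately show "a \<otimes>\<^bsub>G i\<^esub> b \<in> D i" unfolding D_def by (metis (no_types, lifting) image_eqI)
  qed

  have Hi_eq: "Hi i = \<Inter>(insert H ((\<lambda>j. {x \<in> topspace ?X. x j \<in> {\<one>\<^bsub>G j\<^esub>}}) ` lt i))" for i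
    using Hsub topX by (auto simp: Hi_def)
  have Hi_closed: "closedin ?X (Hi i)" if i: "i \<in> I" for i
    unfolding Hi_eq
  proof (rule closedin_Inter)
    fix S assume "S \<in> insert H ((\<lambda>j. {x \<in> topspace ?X. x j \<in> {\<one>\<^bsub>G j\<^esub>}}) ` lt i)"
    then show "closedin ?X S"
    proof (elim insertE)
      assume "S = H" then show ?thesis using Hc by simp
    next
      assume "S \<in> (\<lambda>j. {x \<in> topspace ?X. x j \<in> {\<one>\<^bsub>G j\<^esub>}}) ` lt i"
      then obtain j where j: "j \<in> I" and S: "S = {x \<in> topspace ?X. x j \<in> {\<one>\<^bsub>G j\<^esub>}}"
        by (auto simp: lt_def)
      have "closedin (T j) {\<one>\<^bsub>G j\<^esub>}"
        using hi[OF j] ti[OF j] gi[OF j] by (simp add: closedin_Hausdorff_singleton group.is_monoid monoid.one_closed)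
      then show ?thesis unfolding S
        by (rule closedin_continuous_map_preimage[OF continuous_map_product_projection[OF j]])
    qed
  qed simp
  have Dcl: "closedin (T i) (D i)" if i: "i \<in> I" for i
  proof -
    have "compactin ?X (Hi i)" using cX Hi_closed[OF i] by (rule closedin_compact_space)
    then have "compactin (T i) (D i)" unfolding D_def
      by (rule image_compactin[OF _ continuous_map_product_projection[OF i]])
    then show ?thesis using hi[OF i] compactin_imp_closedin by blast
  qed

  have "\<forall>i\<in>I. \<exists>K. closedin (T i) K \<and> permutable_complement (G i) (D i) K"
    using Cg Dsub Dcl by (auto simp: profinite_C_group_def)
  then obtain Cc where Cc: "\<And>i. i \<in> I \<Longrightarrow> closedin (T i) (Cc i) \<and> permutable_complement (G i) (D i) (Cc i)"
    by metis
  have Ccs: "subgroup (Cc i) (G i)" and DC: "D i <#>\<^bsub>G i\<^esub> Cc i = carrier (G i)"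
    and DCi: "D i \<inter> Cc i = {\<one>\<^bsub>G i\<^esub>}" if "i \<in> I" for i
    using Cc[OF that] by (auto simp: permutable_complement_def)
  define K where "K = PiE I Cc"
  have Kc: "closedin ?X K" unfolding K_def closedin_product_topology using Cc by blast
  have Ks: "subgroup K ?P" unfolding K_def using gi Ccs by (simp add: PiE_subgroup_product_group)

  have inter: "H \<inter> K = {\<one>\<^bsub>?P\<^esub>}"
  proof
    show "{\<one>\<^bsub>?P\<^esub>} \<subseteq> H \<inter> K" using one_H subgroup.one_closed[OF Ks] by simp
    show "H \<inter> K \<subseteq> {\<one>\<^bsub>?P\<^esub>}"
    proof
      fix h assume hHK: "h \<in> H \<inter> K"
      have hc: "h \<in> carrier ?P" using hHK Hsub by auto
      have onec: "\<one>\<^bsub>?P\<^esub> \<in> carrier ?P" using gP by (simp add: group.is_monoid monoid.one_closed del: one_product_group carrier_product_group)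
      show "h \<in> {\<one>\<^bsub>?P\<^esub>}"
      proof (rule ccontr)
        assume ne: "h \<notin> {\<one>\<^bsub>?P\<^esub>}"
        have "\<exists>i\<in>I. h i \<noteq> \<one>\<^bsub>G i\<^esub>"
        proof (rule ccontr)
          assume "\<not> (\<exists>i\<in>I. h i \<noteq> \<one>\<^bsub>G i\<^esub>)"
          then have "h = \<one>\<^bsub>?P\<^esub>"
            using hc onec by (intro PiE_ext[of _ I "\<lambda>i. carrier (G i)"]) auto
          then show False using ne by simp
        qed
        then obtain i0 where i0: "i0 \<in> {i \<in> I. h i \<noteq> \<one>\<^bsub>G i\<^esub>}" by blast
        obtain m where m: "m \<in> {i \<in> I. h i \<noteq> \<one>\<^bsub>G i\<^esub>}"
          and mmin: "\<And>y. (y, m) \<in> r - Id \<Longrightarrow> y \<notin> {i \<in> I. h i \<noteq> \<one>\<^bsub>G i\<^esub>}"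
          using wfE_min[OF rwf i0] by blast
        have "h \<in> Hi m"
          unfolding Hi_def using hHK mmin by (auto simp: lt_def)
        then have "h m \<in> D m" by (simp add: D_def)
        moreover have "h m \<in> Cc m" using hHK m by (auto simp: K_def)
        ultimately have "h m \<in> {\<one>\<^bsub>G m\<^esub>}" using DCi m by blast
        then show False using m by simp
      qed
    qed
  qed
  have prod: "H <#>\<^bsub>?P\<^esub> K = carrier ?P"
  proof
    have "h \<otimes>\<^bsub>?P\<^esub> k \<in> carrier ?P" if "h \<in> H" "k \<in> K" for h k
      using monoid.m_closed[OF group.is_monoid[OF gP]] Hsub subgroup.subset[OF Ks] that by blast
    then show "H <#>\<^bsub>?P\<^esub> K \<subseteq> carrier ?P"
      unfolding set_mult_def by blast
    show "carrier ?P \<subseteq> H <#>\<^bsub>?P\<^esub> K"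
    proof
      fix g assume g: "g \<in> carrier ?P"
      define B where "B S = {h \<in> H. \<forall>j\<in>S. inv\<^bsub>G j\<^esub> (h j) \<otimes>\<^bsub>G j\<^esub> g j \<in> Cc j}" for S
      have Bmono: "B S' \<subseteq> B S" if "S \<subseteq> S'" for S S' using that by (auto simp: B_def)
      have Bsub: "B S \<subseteq> H" for S by (auto simp: B_def)
      have Bcl: "closedin ?X (B S)" if S: "S \<subseteq> I" for S
      proof -
        have "B S = \<Inter>(insert H ((\<lambda>j. {x \<in> topspace ?X. inv\<^bsub>G j\<^esub> (x j) \<otimes>\<^bsub>G j\<^esub> g j \<in> Cc j}) ` S))"
          using Hsub topX by (auto simp: B_def)
        also have "closedin ?X \<dots>"
        proof (rule closedin_Inter)
          fix U assume "U \<in> insert H ((\<lambda>j. {x \<in> topspace ?X. inv\<^bsub>G j\<^esub> (x j) \<otimes>\<^bsub>G j\<^esub> g j \<in> Cc j}) ` S)"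
          then show "closedin ?X U"
          proof (elim insertE)
            assume "U = H" then show ?thesis using Hc by simp
          next
            assume "U \<in> (\<lambda>j. {x \<in> topspace ?X. inv\<^bsub>G j\<^esub> (x j) \<otimes>\<^bsub>G j\<^esub> g j \<in> Cc j}) ` S"
            then obtain j where j: "j \<in> I" and U: "U = {x \<in> topspace ?X. inv\<^bsub>G j\<^esub> (x j) \<otimes>\<^bsub>G j\<^esub> g j \<in> Cc j}"
              using S by auto
            have gj: "g j \<in> topspace (T j)" using g j ti[OF j] by auto
            have "continuous_map ?X (T j) (\<lambda>x. inv\<^bsub>G j\<^esub> (x j) \<otimes>\<^bsub>G j\<^esub> g j)"
              by (rule tg_mult_cont[OF tgi[OF j] tg_inv_cont[OF tgi[OF j] continuous_map_product_projection[of j I T, OF j]]])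
                (simp add: gj)
            then show ?thesis unfolding U
              using Cc[OF j] by (intro closedin_continuous_map_preimage) auto
          qed
        qed simp
        finally show ?thesis .
      qed
      have le_mono: "le j \<subseteq> le j'" if "(j, j') \<in> r" for j j' using that rtrans by (auto simp: le_def)
      have chain: "\<forall>U\<in>(\<lambda>j. B (le j)) ` S. \<forall>V\<in>(\<lambda>j. B (le j)) ` S. U \<subseteq> V \<or> V \<subseteq> U" for S
      proof (intro ballI)
        fix U V assume "U \<in> (\<lambda>j. B (le j)) ` S" "V \<in> (\<lambda>j. B (le j)) ` S"
        then obtain j j' where U: "U = B (le j)" and V: "V = B (le j')" by blast
        show "U \<subseteq> V \<or> V \<subseteq> U"
        proof (cases "(j, j') \<in> r")
          case True then show ?thesis using U V Bmono le_mono by blast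
        next
          case False then have "(j', j) \<in> r" using rtot by blast
          then show ?thesis using U V Bmono le_mono by blast
        qed
      qed
      have Hne: "H \<noteq> {}" using one_H by blast
      have step: "B (le i) \<noteq> {}" if i: "i \<in> I" and ne: "B (lt i) \<noteq> {}" for i
      proof -
        obtain h0 where h0: "h0 \<in> B (lt i)" using ne by blast
        then have h0H: "h0 \<in> H" by (simp add: B_def)
        then have h0c: "h0 \<in> carrier ?P" using Hsub by blast
        have h0i: "h0 i \<in> carrier (G i)" using h0c i by auto
        have gic: "g i \<in> carrier (G i)" using g i by auto
        have "inv\<^bsub>G i\<^esub> (h0 i) \<otimes>\<^bsub>G i\<^esub> g i \<in> carrier (G i)"
          using gi[OF i] h0i gic by (simp add: group.subgroup_self subgroup.m_closed subgroup.m_inv_closed)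
        then have "inv\<^bsub>G i\<^esub> (h0 i) \<otimes>\<^bsub>G i\<^esub> g i \<in> D i <#>\<^bsub>G i\<^esub> Cc i" using DC[OF i] by simp
        then obtain d c where d: "d \<in> D i" and c: "c \<in> Cc i"
          and dc: "inv\<^bsub>G i\<^esub> (h0 i) \<otimes>\<^bsub>G i\<^esub> g i = d \<otimes>\<^bsub>G i\<^esub> c"
          unfolding set_mult_def by blast
        obtain e where e: "e \<in> Hi i" and de: "d = e i" using d by (auto simp: D_def)
        have eH: "e \<in> H" using e by (simp add: Hi_def)
        have e1: "e j = \<one>\<^bsub>G j\<^esub>" if "j \<in> lt i" for j using e that by (simp add: Hi_def)
        define h' where "h' = h0 \<otimes>\<^bsub>?P\<^esub> e"
        have h'H: "h' \<in> H" unfolding h'_def by (rule subgroup.m_closed[OF Hs h0H eH])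
        have dcar: "d \<in> carrier (G i)" using subgroup.subset[OF Dsub[OF i]] d by blast
        have ccar: "c \<in> carrier (G i)" using subgroup.subset[OF Ccs[OF i]] c by blast
        have "h' \<in> B (le i)"
          unfolding B_def
        proof (intro CollectI conjI ballI)
          show "h' \<in> H" by (rule h'H)
          fix j assume j: "j \<in> le i"
          show "inv\<^bsub>G j\<^esub> (h' j) \<otimes>\<^bsub>G j\<^esub> g j \<in> Cc j"
          proof (cases "j = i")
            case True
            have "h' i = h0 i \<otimes>\<^bsub>G i\<^esub> d" using i de by (simp add: h'_def)
            then have "inv\<^bsub>G i\<^esub> (h' i) \<otimes>\<^bsub>G i\<^esub> g i = c"
              using group.inv_prod_aux[OF gi[OF i] h0i dcar gic ccar dc] by simp
            then show ?thesis using True c by simp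
          next
            case False
            then have jl: "j \<in> lt i" using j by (auto simp: le_def lt_def)
            then have jI: "j \<in> I" by (simp add: lt_def)
            have "h0 j \<in> carrier (G j)" using h0c jI by auto
            then have "h' j = h0 j" using e1[OF jl] jI gi[OF jI]
              by (simp add: h'_def group.is_monoid monoid.r_one)
            then show ?thesis using h0 jl by (simp add: B_def)
          qed
        qed
        then show ?thesis by blast
      qed
      have all: "\<forall>i. i \<in> I \<longrightarrow> B (le i) \<noteq> {}"
      proof (rule allI, rule wf_induct[OF rwf])
        fix i assume IH: "\<forall>j. (j, i) \<in> r - Id \<longrightarrow> j \<in> I \<longrightarrow> B (le j) \<noteq> {}"
        show "i \<in> I \<longrightarrow> B (le i) \<noteq> {}"
        proof
          assume i: "i \<in> I"
          have "H \<inter> \<Inter>((\<lambda>j. B (le j)) ` lt i) \<noteq> {}"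
          proof (rule chain_closed_Inter_nonempty[OF cX Hc Hne _ chain])
            show "\<forall>U\<in>(\<lambda>j. B (le j)) ` lt i. closedin ?X U \<and> U \<subseteq> H \<and> U \<noteq> {}"
              using IH Bcl Bsub by (auto simp: lt_def le_def)
          qed
          moreover have "H \<inter> \<Inter>((\<lambda>j. B (le j)) ` lt i) \<subseteq> B (lt i)"
            using rrefl by (auto simp: B_def le_def lt_def)
          ultimately have "B (lt i) \<noteq> {}" by blast
          then show "B (le i) \<noteq> {}" by (rule step[OF i])
        qed
      qed
      have "H \<inter> \<Inter>((\<lambda>i. B (le i)) ` I) \<noteq> {}"
      proof (rule chain_closed_Inter_nonempty[OF cX Hc Hne _ chain])
        show "\<forall>U\<in>(\<lambda>j. B (le j)) ` I. closedin ?X U \<and> U \<subseteq> H \<and> U \<noteq> {}"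
          using all Bcl Bsub by (auto simp: le_def)
      qed
      moreover have "H \<inter> \<Inter>((\<lambda>i. B (le i)) ` I) \<subseteq> B I"
        using rrefl by (auto simp: B_def le_def)
      ultimately obtain h where h: "h \<in> B I" by blast
      then have hH: "h \<in> H" by (simp add: B_def)
      then have hc: "h \<in> carrier ?P" using Hsub by blast
      define k where "k = inv\<^bsub>?P\<^esub> h \<otimes>\<^bsub>?P\<^esub> g"
      have "k = (\<lambda>i\<in>I. inv\<^bsub>G i\<^esub> (h i) \<otimes>\<^bsub>G i\<^esub> g i)"
        unfolding k_def using invP[OF hc] by (auto simp: fun_eq_iff)
      then have kK: "k \<in> K" using h by (auto simp: K_def B_def)
      have invc: "inv\<^bsub>?P\<^esub> h \<in> carrier ?P" using gP hc by (rule group.inv_closed)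
      have kc: "k \<in> carrier ?P" unfolding k_def
        using gP invc g by (rule group.is_monoid[THEN monoid.m_closed])
      have "g = h \<otimes>\<^bsub>?P\<^esub> k"
        using group.inv_solve_left[OF gP kc hc g] k_def by simp
      then show "g \<in> H <#>\<^bsub>?P\<^esub> K" unfolding set_mult_def using hH kK by blast
    qed
  qed
  show ?thesis using Kc Ks inter prod by (auto simp: permutable_complement_def)
qed



lemma product_C:
  assumes "\<forall>i\<in>I. profinite_C_group (G i) (T i)"
  shows "profinite_C_group (product_group I G) (product_topology T I)"
  unfolding profinite_C_group_def
proof (intro conjI allI impI)
  show "profinite_group (product_group I G) (product_topology T I)"
    using assms by (intro product_profinite) (simp add: profinite_C_group_def)
  fix H assume "subgroup H (product_group I G) \<and> closedin (product_topology T I) H"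
  then show "\<exists>K. closedin (product_topology T I) K \<and> permutable_complement (product_group I G) H K"
    using product_complement[OF assms] by blast
qed

lemma closed_subgroup_C:
  assumes C: "profinite_C_group G T" and L: "subgroup L G" and Lc: "closedin T L"
  shows "profinite_C_group (G\<lparr>carrier := L\<rparr>) (subtopology T L)"
proof -
  have pf: "profinite_group G T" using C by (simp add: profinite_C_group_def)
  then have tg: "topological_group G T" by (simp add: profinite_group_def)
  then have gG: "group G" and top: "topspace T = carrier G"
    and mc: "continuous_map (prod_topology T T) T (\<lambda>(x, y). x \<otimes>\<^bsub>G\<^esub> y)"
    and ic: "continuous_map T T (\<lambda>x. inv\<^bsub>G\<^esub> x)"
    by (auto simp: topological_group_def)
  have Lsub: "L \<subseteq> carrier G" using L by (rule subgroup.subset)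
  have topL: "topspace (subtopology T L) = L" using Lsub top by auto
  have tgL: "topological_group (G\<lparr>carrier := L\<rparr>) (subtopology T L)"
    unfolding topological_group_def
  proof (intro conjI)
    show "group (G\<lparr>carrier := L\<rparr>)" using L gG by (rule subgroup.subgroup_is_group)
    show "topspace (subtopology T L) = carrier (G\<lparr>carrier := L\<rparr>)" using topL by simp
    have "continuous_map (subtopology (prod_topology T T) (L \<times> L)) (subtopology T L) (\<lambda>(x, y). x \<otimes>\<^bsub>G\<^esub> y)"
      by (rule continuous_map_into_subtopology[OF continuous_map_from_subtopology[OF mc]])
        (use L in \<open>auto intro: subgroup.m_closed\<close>)
    then show "continuous_map (prod_topology (subtopology T L) (subtopology T L)) (subtopology T L)
        (\<lambda>(x, y). x \<otimes>\<^bsub>G\<lparr>carrier := L\<rparr>\<^esub> y)"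
      by (simp add: subtopology_Times)
    have "continuous_map (subtopology T L) (subtopology T L) (\<lambda>x. inv\<^bsub>G\<^esub> x)"
      by (rule continuous_map_into_subtopology[OF continuous_map_from_subtopology[OF ic]])
        (use L Lsub top in \<open>auto intro: subgroup.m_inv_closed\<close>)
    then show "continuous_map (subtopology T L) (subtopology T L) (\<lambda>x. inv\<^bsub>G\<lparr>carrier := L\<rparr>\<^esub> x)"
      by (rule continuous_map_eq) (use topL group.m_inv_consistent[OF gG L] in auto)
  qed
  have pfL: "profinite_group (G\<lparr>carrier := L\<rparr>) (subtopology T L)"
    unfolding profinite_group_def
  proof (intro conjI)
    show "topological_group (G\<lparr>carrier := L\<rparr>) (subtopology T L)" by (rule tgL)
    show "compact_space (subtopology T L)"
      using pf Lc by (intro compact_space_subtopology closedin_compact_space) (auto simp: profinite_group_def)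
    show "Hausdorff_space (subtopology T L)"
      using pf by (intro Hausdorff_space_subtopology) (simp add: profinite_group_def)
    show "totally_disconnected_space (subtopology T L)"
      using pf by (auto simp: profinite_group_def totally_disconnected_space_def connectedin_subtopology)
  qed
  show ?thesis
    unfolding profinite_C_group_def
  proof (intro conjI allI impI)
    show "profinite_group (G\<lparr>carrier := L\<rparr>) (subtopology T L)" by (rule pfL)
    fix H assume H: "subgroup H (G\<lparr>carrier := L\<rparr>) \<and> closedin (subtopology T L) H"
    then have HG: "subgroup H G" using group.incl_subgroup[OF gG L] by blast
    have Hc: "closedin T H" using H Lc closedin_trans_full by blast
    have HL: "H \<subseteq> L" using subgroup.subset[of H "G\<lparr>carrier := L\<rparr>"] H by simp
    obtain K where Kc: "closedin T K" and pc: "permutable_complement G H K"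
      using C HG Hc by (auto simp: profinite_C_group_def)
    have Ks: "subgroup K G" and HK: "H <#>\<^bsub>G\<^esub> K = carrier G" and HKi: "H \<inter> K = {\<one>\<^bsub>G\<^esub>}"
      using pc by (auto simp: permutable_complement_def)
    have KLs: "subgroup (K \<inter> L) G" by (rule subgroup_Int[OF Ks L])
    show "\<exists>K'. closedin (subtopology T L) K' \<and> permutable_complement (G\<lparr>carrier := L\<rparr>) H K'"
    proof (intro exI conjI)
      show "closedin (subtopology T L) (K \<inter> L)"
        using Kc by (metis closedin_subtopology_Int_closed inf_commute)
      show "permutable_complement (G\<lparr>carrier := L\<rparr>) H (K \<inter> L)"
        unfolding permutable_complement_def
      proof (intro conjI)
        show "subgroup (K \<inter> L) (G\<lparr>carrier := L\<rparr>)"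
          by (rule group.subgroup_incl[OF gG KLs L]) blast
        show "H \<inter> (K \<inter> L) = {\<one>\<^bsub>G\<lparr>carrier := L\<rparr>\<^esub>}"
          using HKi HL subgroup.one_closed[OF L] by auto
        have "H <#>\<^bsub>G\<^esub> (K \<inter> L) = L"
        proof
          show "H <#>\<^bsub>G\<^esub> (K \<inter> L) \<subseteq> L"
            using HL L unfolding set_mult_def by (auto intro: subgroup.m_closed)
          show "L \<subseteq> H <#>\<^bsub>G\<^esub> (K \<inter> L)"
          proof
            fix l assume l: "l \<in> L"
            then have "l \<in> H <#>\<^bsub>G\<^esub> K" using HK Lsub by auto
            then obtain h k where h: "h \<in> H" and k: "k \<in> K" and lhk: "l = h \<otimes>\<^bsub>G\<^esub> k"
              unfolding set_mult_def by blast
            have hc: "h \<in> carrier G" and kc: "k \<in> carrier G"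
              using h k HG Ks by (auto dest: subgroup.subset)
            have "k = inv\<^bsub>G\<^esub> h \<otimes>\<^bsub>G\<^esub> l"
              using group.inv_solve_left[OF gG kc hc] lhk l Lsub by auto
            moreover have "inv\<^bsub>G\<^esub> h \<otimes>\<^bsub>G\<^esub> l \<in> L"
              using h HL l L by (auto intro: subgroup.m_closed subgroup.m_inv_closed)
            ultimately have "k \<in> K \<inter> L" using k by simp
            then show "l \<in> H <#>\<^bsub>G\<^esub> (K \<inter> L)" unfolding set_mult_def using h lhk by blast
          qed
        qed
        then show "H <#>\<^bsub>G\<lparr>carrier := L\<rparr>\<^esub> (K \<inter> L) = carrier (G\<lparr>carrier := L\<rparr>)"
          by (simp add: set_mult_def)
      qed
    qed
  qed
qed



lemma inv_limit_subgroup_closed: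
  assumes IS: "inverse_system I leq G T f" and Hd: "\<forall>i\<in>I. Hausdorff_space (T i)"
  shows "subgroup (inv_limit_carrier I leq G f) (product_group I G)"
    and "closedin (product_topology T I) (inv_limit_carrier I leq G f)"
proof -
  let ?L = "inv_limit_carrier I leq G f" and ?P = "product_group I G" and ?X = "product_topology T I"
  have tg_all: "\<forall>i\<in>I. topological_group (G i) (T i)"
    and hf: "\<forall>i\<in>I. \<forall>j\<in>I. leq j i \<longrightarrow> f i j \<in> hom (G i) (G j) \<and> continuous_map (T i) (T j) (f i j)"
    using IS unfolding inverse_system_def by blast+
  have tgi: "topological_group (G i) (T i)" if "i \<in> I" for i using tg_all that by blast
  have gi: "group (G i)" if "i \<in> I" for i using tgi[OF that] by (simp add: topological_group_def)
  have ti: "topspace (T i) = carrier (G i)" if "i \<in> I" for i using tgi[OF that] by (simp add: topological_group_def)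
  have fh: "f i j \<in> hom (G i) (G j)" and fc: "continuous_map (T i) (T j) (f i j)"
    if "i \<in> I" "j \<in> I" "leq j i" for i j using hf that by blast+
  have gh: "group_hom (G i) (G j) (f i j)" if "i \<in> I" "j \<in> I" "leq j i" for i j
    using gi fh that by (simp add: group_hom_def group_hom_axioms_def)
  have gP: "group ?P" using gi by simp
  show "subgroup ?L ?P"
  proof (rule group.subgroupI[OF gP])
    show "?L \<subseteq> carrier ?P" by (auto simp: inv_limit_carrier_def)
    have "\<one>\<^bsub>?P\<^esub> \<in> ?L"
      using gi gh by (auto simp: inv_limit_carrier_def group.is_monoid monoid.one_closed group_hom.hom_one)
    then show "?L \<noteq> {}" by blast
  next
    fix a assume a: "a \<in> ?L"
    then have ac: "a \<in> carrier ?P" by (auto simp: inv_limit_carrier_def)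
    have "(\<lambda>i\<in>I. inv\<^bsub>G i\<^esub> a i) \<in> ?L"
    proof -
      have "f i j (inv\<^bsub>G i\<^esub> a i) = inv\<^bsub>G j\<^esub> a j" if "i \<in> I" "j \<in> I" "leq j i" for i j
      proof -
        have "a i \<in> carrier (G i)" using a that by (auto simp: inv_limit_carrier_def)
        then have "f i j (inv\<^bsub>G i\<^esub> a i) = inv\<^bsub>G j\<^esub> (f i j (a i))"
          by (rule group_hom.hom_inv[OF gh[OF that]])
        also have "f i j (a i) = a j" using a that by (auto simp: inv_limit_carrier_def)
        finally show ?thesis .
      qed
      then show ?thesis using a gi by (auto simp: inv_limit_carrier_def PiE_iff)
    qed
    then show "inv\<^bsub>?P\<^esub> a \<in> ?L" using ac gi by simp
  next
    fix a b assume a: "a \<in> ?L" and b: "b \<in> ?L"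
    show "a \<otimes>\<^bsub>?P\<^esub> b \<in> ?L"
    proof -
      have "f i j (a i \<otimes>\<^bsub>G i\<^esub> b i) = a j \<otimes>\<^bsub>G j\<^esub> b j" if "i \<in> I" "j \<in> I" "leq j i" for i j
      proof -
        have "a i \<in> carrier (G i)" "b i \<in> carrier (G i)" using a b that by (auto simp: inv_limit_carrier_def)
        then have "f i j (a i \<otimes>\<^bsub>G i\<^esub> b i) = f i j (a i) \<otimes>\<^bsub>G j\<^esub> f i j (b i)"
          by (rule hom_mult[OF fh[OF that]])
        also have "f i j (a i) = a j" using a that by (auto simp: inv_limit_carrier_def)
        also have "f i j (b i) = b j" using b that by (auto simp: inv_limit_carrier_def)
        finally show ?thesis .
      qed
      then show ?thesis using a b gi by (auto simp: inv_limit_carrier_def PiE_iff group.is_monoid monoid.m_closed)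
    qed
  qed
  have topX: "topspace ?X = (\<Pi>\<^sub>E i\<in>I. carrier (G i))"
    using ti by (simp add: topspace_product_topology cong: PiE_cong)
  have eq: "?L = \<Inter>(insert (topspace ?X) ((\<lambda>(i, j). {x \<in> topspace ?X. f i j (x i) = x j}) ` {(i, j). i \<in> I \<and> j \<in> I \<and> leq j i}))"
  proof (rule Set.set_eqI)
    fix x
    have "x \<in> \<Inter>(insert (topspace ?X) ((\<lambda>(i, j). {x \<in> topspace ?X. f i j (x i) = x j}) ` {(i, j). i \<in> I \<and> j \<in> I \<and> leq j i}))
       \<longleftrightarrow> x \<in> topspace ?X \<and> (\<forall>i\<in>I. \<forall>j\<in>I. leq j i \<longrightarrow> f i j (x i) = x j)"
      by auto
    then show "x \<in> ?L \<longleftrightarrow> x \<in> \<Inter>(insert (topspace ?X) ((\<lambda>(i, j). {x \<in> topspace ?X. f i j (x i) = x j}) ` {(i, j). i \<in> I \<and> j \<in> I \<and> leq j i}))"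
      by (simp only: inv_limit_carrier_def topX mem_Collect_eq)
  qed
  show "closedin ?X ?L"
    unfolding eq
  proof (rule closedin_Inter)
    fix S assume "S \<in> insert (topspace ?X) ((\<lambda>(i, j). {x \<in> topspace ?X. f i j (x i) = x j}) ` {(i, j). i \<in> I \<and> j \<in> I \<and> leq j i})"
    then show "closedin ?X S"
    proof (elim insertE)
      assume "S = topspace ?X" then show ?thesis by (simp only: closedin_topspace)
    next
      assume "S \<in> (\<lambda>(i, j). {x \<in> topspace ?X. f i j (x i) = x j}) ` {(i, j). i \<in> I \<and> j \<in> I \<and> leq j i}"
      then obtain i j where ij: "i \<in> I" "j \<in> I" "leq j i" and S: "S = {x \<in> topspace ?X. f i j (x i) = x j}"
        by auto
      have c1: "continuous_map ?X (T j) (f i j \<circ> (\<lambda>x. x i))"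
        by (rule continuous_map_compose[OF continuous_map_product_projection[of i I T, OF ij(1)] fc[OF ij]])
      show ?thesis unfolding S
        using closedin_continuous_maps_eq[OF _ c1 continuous_map_product_projection[of j I T, OF ij(2)]] Hd ij
        by (simp add: o_def)
    qed
  qed simp
qed

theorem theorem2p4:
  shows "(\<forall>(I :: 'i set) (G :: 'i \<Rightarrow> ('a, 'b) monoid_scheme) (T :: 'i \<Rightarrow> 'a topology).
            (\<forall>i\<in>I. profinite_C_group (G i) (T i)) \<longrightarrow>
            profinite_C_group (product_group I G) (product_topology T I))
       \<and> (\<forall>(I :: 'j set) leq (G :: 'j \<Rightarrow> ('c, 'd) monoid_scheme) (T :: 'j \<Rightarrow> 'c topology) f.
            inverse_system I leq G T f \<and> (\<forall>i\<in>I. profinite_C_group (G i) (T i)) \<longrightarrow>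
            profinite_C_group (inv_limit_group I leq G f) (inv_limit_topology I leq G T f))"
proof (intro conjI allI impI)
  fix I :: "'i set" and G :: "'i \<Rightarrow> ('a, 'b) monoid_scheme" and T :: "'i \<Rightarrow> 'a topology"
  assume "\<forall>i\<in>I. profinite_C_group (G i) (T i)"
  then show "profinite_C_group (product_group I G) (product_topology T I)" by (rule product_C)
next
  fix I :: "'j set" and leq and G :: "'j \<Rightarrow> ('c, 'd) monoid_scheme" and T :: "'j \<Rightarrow> 'c topology" and f
  assume a: "inverse_system I leq G T f \<and> (\<forall>i\<in>I. profinite_C_group (G i) (T i))"
  have Hd: "\<forall>i\<in>I. Hausdorff_space (T i)" using a by (simp add: profinite_C_group_def profinite_group_def)
  have PC: "profinite_C_group (product_group I G) (product_topology T I)" using a by (intro product_C) simp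
  show "profinite_C_group (inv_limit_group I leq G f) (inv_limit_topology I leq G T f)"
    unfolding inv_limit_group_def inv_limit_topology_def
    by (rule closed_subgroup_C[OF PC inv_limit_subgroup_closed[OF _ Hd]]) (use a in simp)+
qed

end
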